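(* Let $e,f,g$ be the three edges at a vertex $v$, with $g$ the designated minimal edge at $v$ (so $e$ and $f$ are linked). Fix $\lambda(g)$ and the values of $\lambda$ on all edges other than $e,f$. Then $$\int\frac{d\lambda(e)\,d\lambda(f)}{\lambda(e)\lambda(f)}<2,$$ where the integral is over the set of $(\lambda(e),\lambda(f))\in(0,\infty)^2$ for which the resulting point lies in $\Delta_L$.
   Context: $\Gamma$ is a finite trivalent graph with edge set $E$. A linking choice $L$ assigns to each vertex one of its three edges, the designated minimal edge. $\Delta_L$ is the set of $\lambda\in(0,\infty)^E$ such that, at every vertex with edges $a,b,c$: - the triangle inequalities $\lambda(a)\le\lambda(b)+\lambda(c)$, $\lambda(b)\le\lambda(a)+\lambda(c)$, $\lambda(c)\le\lambda(a)+\lambda(b)$ hold, and - the designated minimal edge has $\lambda$-value at most those of the other two. *)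

theory Defs
  imports "HOL-Analysis.Analysis"
begin

text \<open>A finite trivalent graph (loops and multiple edges allowed): finite vertex set V,
finite edge set E, and for each vertex v the triple inc v of its three edge-ends.\<close>

definition edges_at :: "('v \<Rightarrow> 'e \<times> 'e \<times> 'e) \<Rightarrow> 'v \<Rightarrow> 'e set" where
  "edges_at inc v = (case inc v of (a, b, c) \<Rightarrow> {a, b, c})"

definition ends_count :: "'v set \<Rightarrow> ('v \<Rightarrow> 'e \<times> 'e \<times> 'e) \<Rightarrow> 'e \<Rightarrow> nat" where
  "ends_count V inc x = (\<Sum>v\<in>V. case inc v of (a, b, c) \<Rightarrow>
      (if a = x then 1 else 0) + (if b = x then 1 else 0) + (if c = x then 1 else 0))"

definition trivalent_graph :: "'v set \<Rightarrow> 'e set \<Rightarrow> ('v \<Rightarrow> 'e \<times> 'e \<times> 'e) \<Rightarrow> bool" where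
  "trivalent_graph V E inc \<longleftrightarrow> finite V \<and> finite E \<and>
     (\<forall>v\<in>V. edges_at inc v \<subseteq> E) \<and> (\<forall>x\<in>E. ends_count V inc x = 2)"

definition linking_choice :: "'v set \<Rightarrow> ('v \<Rightarrow> 'e \<times> 'e \<times> 'e) \<Rightarrow> ('v \<Rightarrow> 'e) \<Rightarrow> bool" where
  "linking_choice V inc L \<longleftrightarrow> (\<forall>v\<in>V. L v \<in> edges_at inc v)"

text \<open>Delta_L: positive functions on E satisfying the triangle inequalities at each vertex
and the minimality of the designated edge. Values outside E are irrelevant.\<close>
definition Delta :: "'v set \<Rightarrow> 'e set \<Rightarrow> ('v \<Rightarrow> 'e \<times> 'e \<times> 'e) \<Rightarrow> ('v \<Rightarrow> 'e)
                     \<Rightarrow> ('e \<Rightarrow> real) set" where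
  "Delta V E inc L = {lam. (\<forall>x\<in>E. lam x > 0) \<and>
     (\<forall>v\<in>V. case inc v of (a, b, c) \<Rightarrow>
        lam a \<le> lam b + lam c \<and> lam b \<le> lam a + lam c \<and> lam c \<le> lam a + lam b \<and>
        (\<forall>x\<in>edges_at inc v. lam (L v) \<le> lam x))}"

end

theory Submission
  imports Defs "HOL-Real_Asymp.Real_Asymp"
begin


lemma ln2_lt: "ln (2::real) < 3/4"
proof -
  have "1 + 3/4 + (3/4)\<^sup>2/2 \<le> exp (3/4::real)" by (rule exp_lower_Taylor_quadratic) simp
  hence "2 < exp (3/4::real)" by (simp add: power2_eq_square)
  thus ?thesis by (metis exp_gt_zero ln_exp ln_less_cancel_iff zero_less_numeral)
qed

lemma ln2_ge: "ln (2::real) \<ge> 1/2"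
proof -
  have "ln (1/2::real) \<le> 1/2 - 1" by (rule ln_le_minus_one) simp
  thus ?thesis by (simp add: ln_div)
qed

lemma inner_int:
  fixes a b x :: real
  assumes "0 < a" "a \<le> b" "0 < x"
  shows "(\<integral>\<^sup>+y. ennreal (1/(x*y)) * indicator {a..b} y \<partial>lborel) = ennreal ((ln b - ln a)/x)"
proof -
  have "((\<lambda>y. 1/(x*y)) has_integral (ln b / x - ln a / x)) {a..b}"
  proof (rule fundamental_theorem_of_calculus[OF assms(2)])
    fix y assume "y \<in> {a..b}"
    hence "y > 0" using assms by auto
    show "((\<lambda>y. ln y / x) has_vector_derivative 1/(x*y)) (at y within {a..b})"
      unfolding has_real_derivative_iff_has_vector_derivative[symmetric]
      using \<open>y>0\<close> assms(3) by (auto intro!: derivative_eq_intros simp: field_simps)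
  qed
  hence "(\<integral>\<^sup>+y. ennreal (1/(x*y)) * indicator {a..b} y \<partial>lborel) = ennreal (ln b / x - ln a / x)"
    by (intro nn_integral_has_integral_lebesgue') (use assms in auto)
  thus ?thesis by (simp add: diff_divide_distrib)
qed

lemma tail_int:
  fixes c :: real
  assumes "0 < c"
  shows "(\<integral>\<^sup>+x. ennreal (c/x\<^sup>2 + 1/(x-c) - 1/x) * indicator {2*c..} x \<partial>lborel) = ennreal (1/2 + ln 2)"
proof -
  have "(\<integral>\<^sup>+x. ennreal (c/x\<^sup>2 + 1/(x-c) - 1/x) * indicator {2*c..} x \<partial>lborel)
     = ennreal (0 - (- c/(2*c) + ln (2*c-c) - ln (2*c)))"
  proof (rule nn_integral_FTC_atLeast[where F="\<lambda>x. - c/x + ln (x-c) - ln x"])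
    show "(\<lambda>x. c/x\<^sup>2 + 1/(x-c) - 1/x) \<in> borel_measurable borel" by measurable
    fix x assume x: "2*c \<le> x"
    hence "x > c" "x > 0" "x - c > 0" using assms by auto
    thus "((\<lambda>x. - c/x + ln (x-c) - ln x) has_real_derivative c/x\<^sup>2 + 1/(x-c) - 1/x) (at x)"
      using assms by (auto intro!: derivative_eq_intros simp: field_simps power2_eq_square; simp add: algebra_simps less_imp_le[OF assms])
    have "1/(x-c) - 1/x \<ge> 0" using \<open>x>c\<close> \<open>x > 0\<close> assms by (simp add: field_simps)
    moreover have "c/x\<^sup>2 \<ge> 0" using assms by simp
    ultimately show "0 \<le> c/x\<^sup>2 + 1/(x-c) - 1/x" by linarith
  next
    show "((\<lambda>x. - c/x + ln (x-c) - ln x) \<longlongrightarrow> 0) at_top" using assms by real_asymp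
  qed
  also have "0 - (- c/(2*c) + ln (2*c-c) - ln (2*c)) = 1/2 + ln 2"
    using assms by (simp add: ln_mult)
  finally show ?thesis .
qed



lemma tri_perm:
  fixes lam :: "'e \<Rightarrow> real"
  assumes "{a,b,d} = {e,f,g}" "e\<noteq>f" "e\<noteq>g" "f\<noteq>g"
    "lam a \<le> lam b + lam d" "lam b \<le> lam a + lam d" "lam d \<le> lam a + lam b"
  shows "lam e \<le> lam f + lam g \<and> lam f \<le> lam e + lam g"
proof -
  have "a \<in> {e,f,g}" "b \<in> {e,f,g}" "d \<in> {e,f,g}" "e \<in> {a,b,d}" "f \<in> {a,b,d}" "g \<in> {a,b,d}"
    using assms(1) by blast+
  thus ?thesis using assms(2-) by auto
qed

lemma region:
  fixes lam0 :: "'e \<Rightarrow> real"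
  assumes "v \<in> V" "edges_at inc v = {e, f, g}" "e \<noteq> f" "e \<noteq> g" "f \<noteq> g" "L v = g"
    "g \<in> E" "lam0(e := x, f := y) \<in> Delta V E inc L"
  shows "0 < lam0 g \<and> lam0 g \<le> x \<and> lam0 g \<le> y \<and> x \<le> y + lam0 g \<and> y \<le> x + lam0 g"
proof -
  let ?l = "lam0(e := x, f := y)"
  obtain a b d where abd: "inc v = (a,b,d)" by (cases "inc v") auto
  have s: "{a,b,d} = {e,f,g}" using assms(2) abd by (simp add: edges_at_def)
  from assms(8) have D: "\<forall>x\<in>E. ?l x > 0"
    "?l a \<le> ?l b + ?l d" "?l b \<le> ?l a + ?l d" "?l d \<le> ?l a + ?l b"
    "\<forall>z\<in>edges_at inc v. ?l (L v) \<le> ?l z"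
    using assms(1) abd unfolding Delta_def by (fastforce split: prod.splits)+
  have lg: "?l g = lam0 g" using assms(4,5) by simp
  have "?l e \<le> ?l f + ?l g \<and> ?l f \<le> ?l e + ?l g"
    by (rule tri_perm[OF s assms(3-5) D(2-4)])
  moreover have "?l g \<le> ?l e" "?l g \<le> ?l f" using D(5) assms(2,6) by auto
  moreover have "?l g > 0" using D(1) assms(7) by blast
  ultimately show ?thesis using lg assms(3) by simp
qed



lemma piece1:
  fixes c x :: real assumes "0 < c" "c \<le> x" "x \<le> 2*c"
  shows "(ln (x+c) - ln c)/x \<le> ln 2 / c"
proof -
  have "ln ((x+c)/(2*c)) \<le> (x+c)/(2*c) - 1" by (rule ln_le_minus_one) (use assms in simp)
  hence "ln (x+c) - ln c - ln 2 \<le> (x - c)/(2*c)" using assms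
    by (simp add: ln_div ln_mult field_simps)
  also have "(x - c)/(2*c) \<le> (x - c) * ln 2 / c"
  proof -
    have "(x - c) * (1/2) \<le> (x - c) * ln 2" using assms ln2_ge by (intro mult_left_mono) auto
    hence "(x - c) * (1/2) / c \<le> (x - c) * ln 2 / c" by (rule divide_right_mono) (use assms in auto)
    thus ?thesis by simp
  qed
  finally have "ln (x+c) - ln c \<le> x * ln 2 / c" using assms by (simp add: field_simps)
  thus ?thesis using assms by (simp add: field_simps)
qed

lemma piece2:
  fixes c x :: real assumes "0 < c" "2*c \<le> x"
  shows "(ln (x+c) - ln (x-c))/x \<le> c/x\<^sup>2 + 1/(x-c) - 1/x"
proof -
  have x: "x > 0" "x - c > 0" using assms by auto
  have "ln ((x+c)/x) \<le> (x+c)/x - 1" by (rule ln_le_minus_one) (use x assms in simp)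
  moreover have "ln ((x+c)/x) = ln (x+c) - ln x" using x assms by (simp add: ln_div)
  moreover have "(x+c)/x - 1 = c/x" using x by (simp add: field_simps)
  ultimately have h1: "ln (x+c) - ln x \<le> c/x" by simp
  have "ln (x/(x-c)) \<le> x/(x-c) - 1" by (rule ln_le_minus_one) (use x assms in simp)
  moreover have "ln (x/(x-c)) = ln x - ln (x-c)" using x assms by (simp add: ln_div)
  moreover have "x/(x-c) - 1 = c/(x-c)" using x by (simp add: field_simps)
  ultimately have h2: "ln x - ln (x-c) \<le> c/(x-c)" by simp
  have "ln (x+c) - ln (x-c) \<le> c/x + c/(x-c)" using h1 h2 by simp
  hence "(ln (x+c) - ln (x-c))/x \<le> (c/x + c/(x-c))/x" using x by (simp add: divide_right_mono)
  also have "\<dots> = c/x\<^sup>2 + 1/(x-c) - 1/x" using x by (simp add: field_simps power2_eq_square)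
  finally show ?thesis .
qed

theorem mainTheorem9:
  fixes V :: "'v set" and E :: "'e set" and inc :: "'v \<Rightarrow> 'e \<times> 'e \<times> 'e"
    and L :: "'v \<Rightarrow> 'e" and v :: 'v and e f g :: 'e and lam0 :: "'e \<Rightarrow> real"
  assumes "trivalent_graph V E inc"
    and "linking_choice V inc L"
    and "v \<in> V"
    and "edges_at inc v = {e, f, g}"
    and "e \<noteq> f" and "e \<noteq> g" and "f \<noteq> g"
    and "L v = g"
  shows "(\<integral>\<^sup>+ p. indicator {(x, y). x > 0 \<and> y > 0 \<and> lam0(e := x, f := y) \<in> Delta V E inc L} p
            * ennreal (1 / (fst p * snd p)) \<partial>(lborel :: (real \<times> real) measure)) < 2"
proof -
  let ?S = "{(x, y). x > 0 \<and> y > 0 \<and> lam0(e := x, f := y) \<in> Delta V E inc L}"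
  define c where "c = lam0 g"
  have gE: "g \<in> E" using assms(1,3,4) unfolding trivalent_graph_def by blast
  have reg: "0 < c \<and> c \<le> x \<and> c \<le> y \<and> x \<le> y + c \<and> y \<le> x + c" if "(x,y) \<in> ?S" for x y
  proof -
    have "lam0(e := x, f := y) \<in> Delta V E inc L" using that by auto
    from region[OF assms(3-8) gE this] show ?thesis unfolding c_def .
  qed
  show ?thesis
  proof (cases "c > 0")
    case False
    hence "?S = {}" using reg by force
    then have z: "(\<lambda>p. indicator ?S p * ennreal (1 / (fst p * snd p))) = (\<lambda>p. 0)"
      by (intro ext) (metis empty_iff indicator_simps(2) mult_zero_left)
    show ?thesis unfolding z by simp
  next
    case cpos: True
    define R where "R = {(x::real, y::real). c \<le> x \<and> c \<le> y \<and> x \<le> y + c \<and> y \<le> x + c}"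
    have "(\<integral>\<^sup>+ p. indicator ?S p * ennreal (1 / (fst p * snd p)) \<partial>(lborel :: (real \<times> real) measure))
       \<le> (\<integral>\<^sup>+ p. indicator R p * ennreal (1 / (fst p * snd p)) \<partial>(lborel :: (real \<times> real) measure))"
    proof (rule nn_integral_mono)
      fix p :: "real \<times> real"
      have "indicator ?S p \<le> (indicator R p :: ennreal)"
        using reg[of "fst p" "snd p"] unfolding R_def by (cases p) (auto simp: indicator_def)
      thus "indicator ?S p * ennreal (1 / (fst p * snd p)) \<le> indicator R p * ennreal (1 / (fst p * snd p))"
        by (rule mult_right_mono) simp
    qed
    also have "\<dots> = (\<integral>\<^sup>+ x. \<integral>\<^sup>+ y. indicator R (x,y) * ennreal (1 / (x * y)) \<partial>lborel \<partial>lborel)"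
    proof -
      have "R = {p. c \<le> fst p \<and> c \<le> snd p \<and> fst p \<le> snd p + c \<and> snd p \<le> fst p + c}"
        unfolding R_def by auto
      hence Rc: "closed R"
        by (simp only:) (intro closed_Collect_conj closed_Collect_le continuous_intros)
      have m: "(\<lambda>p. indicator R p * ennreal (1 / (fst p * snd p))) \<in> borel_measurable (lborel \<Otimes>\<^sub>M lborel)"
      proof -
        have Rb: "R \<in> sets borel" using Rc by (rule borel_closed)
        have f1: "fst \<in> borel_measurable (borel :: (real\<times>real) measure)"
          by (intro borel_measurable_continuous_onI continuous_intros)
        have f2: "snd \<in> borel_measurable (borel :: (real\<times>real) measure)"
          by (intro borel_measurable_continuous_onI continuous_intros)
        have "(\<lambda>p::real\<times>real. ennreal (1 / (fst p * snd p))) \<in> borel_measurable borel"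
          using f1 f2 by measurable
        hence "(\<lambda>p. indicator R p * ennreal (1 / (fst p * snd p))) \<in> borel_measurable borel"
          using Rb by measurable
        thus ?thesis by (simp add: lborel_prod measurable_lborel1)
      qed
      show ?thesis
        using lborel.nn_integral_fst[OF m] by (simp add: lborel_prod)
    qed
    also have "\<dots> = (\<integral>\<^sup>+ x. indicator {c..} x * ennreal ((ln (x+c) - ln (max c (x-c)))/x) \<partial>lborel)"
    proof (rule nn_integral_cong)
      fix x :: real
      show "(\<integral>\<^sup>+ y. indicator R (x,y) * ennreal (1 / (x * y)) \<partial>lborel)
          = indicator {c..} x * ennreal ((ln (x+c) - ln (max c (x-c)))/x)"
      proof (cases "c \<le> x")
        case False
        hence "\<And>y. indicator R (x,y) = (0::ennreal)" unfolding R_def by (auto simp: indicator_def)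
        thus ?thesis using False by simp
      next
        case True
        have "\<And>y. indicator R (x,y) * ennreal (1 / (x * y)) = ennreal (1 / (x * y)) * indicator {max c (x-c)..x+c} y"
          using True unfolding R_def by (auto simp: indicator_def)
        hence "(\<integral>\<^sup>+ y. indicator R (x,y) * ennreal (1 / (x * y)) \<partial>lborel)
            = ennreal ((ln (x+c) - ln (max c (x-c)))/x)"
          using inner_int[of "max c (x-c)" "x+c" x] True cpos by simp
        thus ?thesis using True by simp
      qed
    qed
    also have "\<dots> \<le> (\<integral>\<^sup>+ x. ennreal (ln 2 / c) * indicator {c..2*c} x
                     + ennreal (c/x\<^sup>2 + 1/(x-c) - 1/x) * indicator {2*c..} x \<partial>lborel)"
    proof (rule nn_integral_mono)
      fix x :: real
      show "indicator {c..} x * ennreal ((ln (x+c) - ln (max c (x-c)))/x)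
          \<le> ennreal (ln 2 / c) * indicator {c..2*c} x
                     + ennreal (c/x\<^sup>2 + 1/(x-c) - 1/x) * indicator {2*c..} x"
      proof (cases "c \<le> x")
        case False thus ?thesis by simp
      next
        case True
        show ?thesis
        proof (cases "x \<le> 2*c")
          case True2: True
          have "max c (x-c) = c" using True2 by simp
          hence "ennreal ((ln (x+c) - ln (max c (x-c)))/x) \<le> ennreal (ln 2 / c)"
            using piece1[OF cpos True True2] by (simp add: ennreal_leI)
          thus ?thesis using True True2 by (simp add: add_increasing2)
        next
          case False2: False
          have "max c (x-c) = x - c" using False2 by simp
          hence "ennreal ((ln (x+c) - ln (max c (x-c)))/x) \<le> ennreal (c/x\<^sup>2 + 1/(x-c) - 1/x)"
            using piece2[OF cpos] False2 by (simp add: ennreal_leI)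
          thus ?thesis using True False2 by (simp add: add_increasing)
        qed
      qed
    qed
    also have "\<dots> = (\<integral>\<^sup>+ x. ennreal (ln 2 / c) * indicator {c..2*c} x \<partial>lborel)
                  + (\<integral>\<^sup>+ x. ennreal (c/x\<^sup>2 + 1/(x-c) - 1/x) * indicator {2*c..} x \<partial>lborel)"
      by (rule nn_integral_add) measurable
    also have "\<dots> = ennreal (ln 2) + ennreal (1/2 + ln 2)"
      using tail_int[OF cpos] cpos
      by (simp add: nn_integral_cmult_indicator ennreal_mult[symmetric])
    also have "\<dots> < 2"
    proof -
      have "ennreal (ln 2) + ennreal (1/2 + ln 2) = ennreal (ln 2 + (1/2 + ln 2))"
        using ln2_ge by (intro ennreal_plus[symmetric]) auto
      also have "\<dots> < ennreal 2" using ln2_lt by (intro ennreal_lessI) auto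
      finally show ?thesis by simp
    qed
    finally show ?thesis .
  qed
qed

end
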